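(* Let $K$ be a field, $\mathcal A$ a $K$-algebra, $\vartheta$ any one of the four types (left, right, pre-two-sided, two-sided), and $M$ a $\vartheta$-Mathieu subspace of $\mathcal A$. Let $a\in\mathcal A$ be algebraic over $K$ with $a^m\in M$ for all $m\ge 1$, and let $k\ge 0$ be the multiplicity of $0\in K$ as a root of the minimal polynomial of $a$ over $K$. Then $(a^k)_\vartheta\subseteq M$. In particular, for $\vartheta\neq$ pre-two-sided, the $\vartheta$-ideal of $\mathcal A$ generated by $a^k$ is contained in $M$.
   Context: All algebras are associative and unital. Let $M$ be a $K$-subspace of $\mathcal A$. $M$ is a left (resp. right) Mathieu subspace if whenever $a\in\mathcal A$ satisfies $a^m\in M$ for all $m\ge1$, then for every $b\in\mathcal A$ there is $N$ with $ba^m\in M$ (resp. $a^mb\in M$) for all $m\ge N$. $M$ is a pre-two-sided Mathieu subspace if it is both a left and a right Mathieu subspace. $M$ is a two-sided Mathieu subspace if whenever $a^m\in M$ for all $m\ge1$, then for all $b,c\in\mathcal A$ there is $N$ with $ba^mc\in M$ for all $m\ge N$. A $\vartheta$-Mathieu subspace is one of the type $\vartheta$. A $\vartheta$-ideal means a left ideal if $\vartheta$ = left, a right ideal if $\vartheta$ = right, and a two-sided ideal if $\vartheta$ is pre-two-sided or two-sided. For $x\in\mathcal A$: $(x)_\vartheta$ is the left ideal $\mathcal Ax$ if $\vartheta$ = left, the right ideal $x\mathcal A$ if $\vartheta$ = right, the two-sided ideal generated by $x$ if $\vartheta$ = two-sided, and $x\mathcal A+\mathcal Ax$ if $\vartheta$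 = pre-two-sided. *)

theory Defs
  imports Main "HOL-Computational_Algebra.Polynomial"
begin

definition K_algebra :: "('k::field \<Rightarrow> 'a::ring_1 \<Rightarrow> 'a) \<Rightarrow> bool" where
  "K_algebra scale \<longleftrightarrow> vector_space scale \<and>
     (\<forall>c x y. scale c (x * y) = scale c x * y \<and> scale c (x * y) = x * scale c y)"

definition aeval :: "('k::field \<Rightarrow> 'a::ring_1 \<Rightarrow> 'a) \<Rightarrow> 'k poly \<Rightarrow> 'a \<Rightarrow> 'a" where
  "aeval scale p x = (\<Sum>i\<le>degree p. scale (coeff p i) (x ^ i))"

definition algebraic_el :: "('k::field \<Rightarrow> 'a::ring_1 \<Rightarrow> 'a) \<Rightarrow> 'a \<Rightarrow> bool" where
  "algebraic_el scale x \<longleftrightarrow> (\<exists>p. p \<noteq> 0 \<and> aeval scale p x = 0)"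

definition is_min_poly :: "('k::field \<Rightarrow> 'a::ring_1 \<Rightarrow> 'a) \<Rightarrow> 'a \<Rightarrow> 'k poly \<Rightarrow> bool" where
  "is_min_poly scale x p \<longleftrightarrow> lead_coeff p = 1 \<and> aeval scale p x = 0 \<and>
     (\<forall>q. q \<noteq> 0 \<and> aeval scale q x = 0 \<longrightarrow> degree p \<le> degree q)"

datatype mtype = LeftT | RightT | PreTwoT | TwoT

definition mathieu_cond :: "mtype \<Rightarrow> 'a::ring_1 set \<Rightarrow> bool" where
  "mathieu_cond \<theta> M \<longleftrightarrow> (\<forall>a. (\<forall>m\<ge>1. a ^ m \<in> M) \<longrightarrow>
     (case \<theta> of
        LeftT \<Rightarrow> (\<forall>b. \<exists>N. \<forall>m\<ge>N. b * a ^ m \<in> M)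
      | RightT \<Rightarrow> (\<forall>b. \<exists>N. \<forall>m\<ge>N. a ^ m * b \<in> M)
      | PreTwoT \<Rightarrow> (\<forall>b. \<exists>N. \<forall>m\<ge>N. b * a ^ m \<in> M) \<and> (\<forall>b. \<exists>N. \<forall>m\<ge>N. a ^ m * b \<in> M)
      | TwoT \<Rightarrow> (\<forall>b c. \<exists>N. \<forall>m\<ge>N. b * a ^ m * c \<in> M)))"

definition mathieu_subspace :: "('k::field \<Rightarrow> 'a::ring_1 \<Rightarrow> 'a) \<Rightarrow> mtype \<Rightarrow> 'a set \<Rightarrow> bool" where
  "mathieu_subspace scale \<theta> M \<longleftrightarrow> module.subspace scale M \<and> mathieu_cond \<theta> M"

definition gen_set :: "mtype \<Rightarrow> 'a::ring_1 \<Rightarrow> 'a set" where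
  "gen_set \<theta> x = (case \<theta> of
      LeftT \<Rightarrow> {b * x | b. True}
    | RightT \<Rightarrow> {x * b | b. True}
    | PreTwoT \<Rightarrow> {x * b + c * x | b c. True}
    | TwoT \<Rightarrow> {y. \<exists>(n::nat) b c. y = (\<Sum>i<n. b i * x * c i)})"

end

theory Submission
  imports Defs
begin

locale kalg = vector_space scale for scale :: "'k::field \<Rightarrow> 'a::ring_1 \<Rightarrow> 'a" +
  assumes ml: "scale c (x*y) = scale c x * y" and mr: "scale c (x*y) = x * scale c y"
begin

lemma sc: "scale c x = scale c 1 * x"
  by (metis ml mult_1_left)

lemma aeval_bound:
  assumes "degree p \<le> n"
  shows "aeval scale p x = (\<Sum>i\<le>n. scale (coeff p i) (x^i))"
  unfolding aeval_def
  by (rule sum.mono_neutral_left) (use assms in \<open>auto simp: coeff_eq_0 not_le\<close>)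

lemma aeval_0[simp]: "aeval scale 0 x = 0"
  by (simp add: aeval_def)

lemma aeval_add: "aeval scale (p+q) x = aeval scale p x + aeval scale q x"
proof -
  let ?n = "max (degree p) (degree q)"
  have "aeval scale (p+q) x = (\<Sum>i\<le>?n. scale (coeff (p+q) i) (x^i))"
    by (rule aeval_bound) (meson degree_add_le max.cobounded1 max.cobounded2)
  also have "\<dots> = (\<Sum>i\<le>?n. scale (coeff p i) (x^i)) + (\<Sum>i\<le>?n. scale (coeff q i) (x^i))"
    by (simp add: scale_left_distrib sum.distrib)
  also have "\<dots> = aeval scale p x + aeval scale q x"
    using aeval_bound[of p ?n x] aeval_bound[of q ?n x] by simp
  finally show ?thesis .
qed

lemma aeval_smult: "aeval scale (smult c p) x = scale c (aeval scale p x)"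
proof -
  have "aeval scale (smult c p) x = (\<Sum>i\<le>degree p. scale (coeff (smult c p) i) (x^i))"
    by (rule aeval_bound) (simp add: degree_smult_le)
  also have "\<dots> = scale c (aeval scale p x)"
    by (simp add: aeval_def scale_sum_right)
  finally show ?thesis .
qed

lemma aeval_pCons: "aeval scale (pCons c p) x = scale c 1 + x * aeval scale p x"
proof -
  have "aeval scale (pCons c p) x = (\<Sum>i\<le>Suc (degree p). scale (coeff (pCons c p) i) (x^i))"
    by (rule aeval_bound) (simp add: degree_pCons_le)
  also have "\<dots> = scale c 1 + (\<Sum>i\<le>degree p. scale (coeff p i) (x * x^i))"
    by (simp only: sum.atMost_Suc_shift) simp
  also have "\<dots> = scale c 1 + x * aeval scale p x"
    by (simp add: aeval_def sum_distrib_left mr)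
  finally show ?thesis .
qed

lemma aeval_1: "aeval scale 1 x = 1"
  by (simp add: aeval_def)

lemma aeval_mult: "aeval scale (p*q) x = aeval scale p x * aeval scale q x"
proof (induct p rule: pCons_induct)
  case 0 then show ?case by simp
next
  case (pCons c p)
  have "aeval scale (pCons c p * q) x = scale c (aeval scale q x) + x * aeval scale (p*q) x"
    by (simp add: aeval_add aeval_smult aeval_pCons)
  also have "\<dots> = (scale c 1 + x * aeval scale p x) * aeval scale q x"
    using pCons(2) by (simp add: distrib_right mult.assoc sc[of c "aeval scale q x"])
  finally show ?case by (simp add: aeval_pCons)
qed

lemma aeval_X: "aeval scale [:0,1:] x = x"
  by (simp add: aeval_pCons)

lemma aeval_power: "aeval scale (p^n) x = aeval scale p x ^ n"
  by (induct n) (simp_all add: aeval_mult aeval_1)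

lemma aeval_comm: "aeval scale p x * aeval scale q x = aeval scale q x * aeval scale p x"
  by (metis aeval_mult mult.commute)

lemma aeval_in:
  assumes S: "subspace M" and am: "\<forall>m\<ge>1. a ^ m \<in> M" and c0: "coeff f 0 = 0"
  shows "aeval scale f a \<in> M"
  unfolding aeval_def
proof (rule subspace_sum[OF S])
  fix i
  show "scale (coeff f i) (a ^ i) \<in> M"
  proof (cases "i = 0")
    case True then show ?thesis using c0 subspace_0[OF S] by simp
  next
    case False then show ?thesis using am subspace_scale[OF S] by simp
  qed
qed

lemma main:
  assumes S: "subspace M" and MC: "mathieu_cond \<theta> M" and am: "\<forall>m\<ge>1. a ^ m \<in> M"
    and p0: "p \<noteq> 0" and pa: "aeval scale p a = 0" and kd: "k = order 0 p"
  shows "gen_set \<theta> (a ^ k) \<subseteq> M"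
proof -
  obtain q where pq: "p = [:-0,1:]^k * q" and nd: "\<not> [:-0,1:] dvd q"
    using order_decomp[OF p0] kd by blast
  obtain c0 r where qr: "q = pCons c0 r" by (cases q)
  have "poly q 0 \<noteq> 0" using nd poly_eq_0_iff_dvd by metis
  hence c0: "c0 \<noteq> 0" by (simp add: poly_0_coeff_0 qr)
  define R where "R = aeval scale r a"
  define U where "U = smult (-1/c0) r"
  define u where "u = aeval scale U a"
  have A: "a^k * (scale c0 1 + a * R) = 0"
    using pa unfolding pq qr minus_zero aeval_mult aeval_power aeval_X unfolding aeval_pCons R_def .
  have A2: "a^Suc k * R = - scale c0 (a^k)"
  proof -
    have "a^k * scale c0 1 + a^k * a * R = 0" using A by (simp add: distrib_left mult.assoc)
    moreover have "a^k * scale c0 1 = scale c0 (a^k)" by (metis mr mult_1_right)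
    ultimately show ?thesis by (simp add: power_Suc2 eq_neg_iff_add_eq_0 add.commute power_commutes)
  qed
  have key: "a^Suc k * u = a^k"
  proof -
    have "a^Suc k * u = scale (-1/c0) (a^Suc k * R)"
      by (simp only: u_def U_def aeval_smult R_def mr[symmetric])
    also have "\<dots> = a^k" using c0 by (simp only: A2) (simp add: scale_scale)
    finally show ?thesis .
  qed
  have ua: "u * a = a * u"
    using aeval_comm[of U a "[:0,1:]"] by (simp add: aeval_X u_def)
  have iter: "a^(k+m) * u^m = a^k" for m
  proof (induct m)
    case 0 then show ?case by simp
  next
    case (Suc m)
    have kk: "k + Suc m = m + Suc k" by simp
    have pa: "a^(k + Suc m) = a^m * a^Suc k" by (simp only: kk power_add)
    have "a^(k + Suc m) * u^Suc m = a^m * (a^Suc k * u) * u^m"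
      by (simp only: pa power_Suc mult.assoc)
    also have "\<dots> = a^(k+m) * u^m" by (simp only: key flip: power_add) (simp add: add.commute)
    finally show ?case using Suc by simp
  qed
  define E where "E = [:0,1:]^(k+1) * U^(k+1)"
  define e where "e = a^k * u^k"
  have eE: "aeval scale E a = e"
  proof -
    have "aeval scale E a = a^(k+1) * u^(k+1)"
      unfolding E_def aeval_mult aeval_power aeval_X u_def ..
    also have "\<dots> = (a^Suc k * u) * u^k" by (simp only: Suc_eq_plus1[symmetric] power_Suc mult.assoc)
    also have "\<dots> = e" by (simp only: key e_def)
    finally show ?thesis .
  qed
  have eM: "e \<in> M"
    using aeval_in[OF S am, of E] eE by (simp add: E_def coeff_mult_0 coeff_0_power)
  have uka: "u^k * a^k = a^k * u^k"
    by (metis power_commuting_commutes ua)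
  have aak: "a^k * a^k = a^(k+k)" by (simp only: power_add)
  have ee: "e * e = e"
  proof -
    have "e * e = a^k * (u^k * a^k) * u^k" by (simp only: e_def mult.assoc)
    also have "\<dots> = (a^k * a^k) * u^k * u^k" by (simp only: uka mult.assoc)
    also have "\<dots> = e" by (simp only: aak iter e_def)
    finally show ?thesis .
  qed
  have epow: "e^Suc m = e" for m
  proof (induct m)
    case 0 then show ?case by simp
  next
    case (Suc m)
    have "e^Suc (Suc m) = e * e^Suc m" by (rule power_Suc)
    then show ?case using Suc ee by simp
  qed
  have ea: "e * a^k = a^k"
  proof -
    have "e * a^k = a^k * (u^k * a^k)" by (simp only: e_def mult.assoc)
    also have "\<dots> = (a^k * a^k) * u^k" by (simp only: uka mult.assoc)
    also have "\<dots> = a^k" by (simp only: aak iter)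
    finally show ?thesis .
  qed
  have ae: "a^k * e = a^k"
  proof -
    have "a^k * e = (a^k * a^k) * u^k" by (simp only: e_def mult.assoc)
    also have "\<dots> = a^k" by (simp only: aak iter)
    finally show ?thesis .
  qed
  have epM: "\<forall>m\<ge>1. e ^ m \<in> M"
  proof (intro allI impI)
    fix m :: nat assume "1 \<le> m"
    then obtain j where "m = Suc j" using Suc_le_D by auto
    then show "e ^ m \<in> M" using epow eM by simp
  qed
  show ?thesis
  proof (cases \<theta>)
    case LeftT
    have L: "\<And>b. b * e \<in> M"
    proof -
      fix b
      obtain N where "\<forall>m\<ge>N. b * e^m \<in> M" using MC epM LeftT unfolding mathieu_cond_def by force
      then show "b * e \<in> M" using epow[of N] by (metis le_SucI order_refl)
    qed
    show ?thesis using LeftT L[of "_ * a^k"] ae by (auto simp: gen_set_def mult.assoc)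
  next
    case RightT
    have L: "\<And>b. e * b \<in> M"
    proof -
      fix b
      obtain N where "\<forall>m\<ge>N. e^m * b \<in> M" using MC epM RightT unfolding mathieu_cond_def by force
      then show "e * b \<in> M" using epow[of N] by (metis le_SucI order_refl)
    qed
    show ?thesis using RightT L[of "a^k * _"] ea by (auto simp: gen_set_def mult.assoc[symmetric])
  next
    case PreTwoT
    have L: "\<And>b. b * e \<in> M"
    proof -
      fix b
      obtain N where "\<forall>m\<ge>N. b * e^m \<in> M" using MC epM PreTwoT unfolding mathieu_cond_def by force
      then show "b * e \<in> M" using epow[of N] by (metis le_SucI order_refl)
    qed
    have R: "\<And>b. e * b \<in> M"
    proof -
      fix b
      obtain N where "\<forall>m\<ge>N. e^m * b \<in> M" using MC epM PreTwoT unfolding mathieu_cond_def by force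
      then show "e * b \<in> M" using epow[of N] by (metis le_SucI order_refl)
    qed
    have "a^k * b + c * a^k \<in> M" for b c
    proof (rule subspace_add[OF S])
      show "a^k * b \<in> M" using R[of "a^k * b"] ea by (simp add: mult.assoc[symmetric])
      show "c * a^k \<in> M" using L[of "c * a^k"] ae by (simp add: mult.assoc)
    qed
    then show ?thesis using PreTwoT by (auto simp: gen_set_def)
  next
    case TwoT
    have T: "\<And>b c. b * e * c \<in> M"
    proof -
      fix b c
      obtain N where "\<forall>m\<ge>N. b * e^m * c \<in> M" using MC epM TwoT unfolding mathieu_cond_def by force
      then show "b * e * c \<in> M" using epow[of N] by (metis le_SucI order_refl)
    qed
    have "(\<Sum>i<n. b i * a^k * c i) \<in> M" for n and b c :: "nat \<Rightarrow> 'a"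
    proof (rule subspace_sum[OF S])
      fix i
      show "b i * a^k * c i \<in> M" using T[of "b i" "a^k * c i"] ea by (metis mult.assoc)
    qed
    then show ?thesis using TwoT by (auto simp: gen_set_def)
  qed
qed

end

theorem theorem3p9:
  fixes scale :: "'k::field \<Rightarrow> 'a::ring_1 \<Rightarrow> 'a"
    and \<theta> :: mtype and M :: "'a set" and a :: 'a and p :: "'k poly" and k :: nat
  assumes "K_algebra scale"
    and "mathieu_subspace scale \<theta> M"
    and "algebraic_el scale a"
    and "\<forall>m\<ge>1. a ^ m \<in> M"
    and "is_min_poly scale a p"
    and "k = order 0 p"
  shows "gen_set \<theta> (a ^ k) \<subseteq> M"
proof -
  interpret kalg scale
    using assms(1) unfolding K_algebra_def kalg_def kalg_axioms_def by blast
  have "p \<noteq> 0" using assms(5) unfolding is_min_poly_def by auto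
  then show ?thesis
    using main[of M \<theta> a p k] assms(2,4,5,6)
    unfolding mathieu_subspace_def is_min_poly_def by blast
qed

end
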